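(* Let $n\ge 2$, $\pi\in S_n$ and $1\le i\le n-1$ with $\pi_i<\pi_{i+1}$, and let $\tau\in S_n$ be obtained from $\pi$ by exchanging the entries in positions $i$ and $i+1$. Let $\lambda=\lambda(\pi)$ and $\mu=\lambda(\tau)$, with parts $\lambda_1\ge\lambda_2\ge\cdots$ and $\mu_1\ge\mu_2\ge\cdots$ (set $\lambda_m=0$, $\mu_m=0$ for $m$ beyond the number of parts). Then for every $1\le j\le n$, \[\sum_{m=1}^j \mu_m\le \sum_{m=1}^j\lambda_m\le \sum_{m=1}^j\mu_m+1.\]
   Context: Permutations $\pi\in S_n$ are written in one-line notation $\pi=\pi_1\pi_2\cdots\pi_n$. For $\pi\in S_n$, $\lambda(\pi)$ denotes the shape (a partition of $n$) of the pair of standard Young tableaux associated with $\pi$ by the Robinson–Schensted–Knuth (RSK) correspondence. *)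

theory Defs
  imports Main
begin

text \<open>Permutations of {1..n} in one-line notation are lists. Tableaux are lists of rows
(each row an increasing list).\<close>

fun row_ins :: "nat \<Rightarrow> nat list \<Rightarrow> nat option \<times> nat list" where
  "row_ins x [] = (None, [x])"
| "row_ins x (y # ys) =
     (if x < y then (Some y, x # ys)
      else (let (b, ys') = row_ins x ys in (b, y # ys')))"

fun tab_ins :: "nat \<Rightarrow> nat list list \<Rightarrow> nat list list" where
  "tab_ins x [] = [[x]]"
| "tab_ins x (r # rs) =
     (case row_ins x r of
        (None, r') \<Rightarrow> r' # rs
      | (Some y, r') \<Rightarrow> r' # tab_ins y rs)"

definition rsk_P :: "nat list \<Rightarrow> nat list list" where
  "rsk_P w = foldl (\<lambda>T x. tab_ins x T) [] w"

definition rsk_shape :: "nat list \<Rightarrow> nat list" where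
  "rsk_shape w = map length (rsk_P w)"

definition part :: "nat list \<Rightarrow> nat \<Rightarrow> nat" where
  "part lam m = (if 1 \<le> m \<and> m \<le> length lam then lam ! (m - 1) else 0)"

definition is_perm :: "nat \<Rightarrow> nat list \<Rightarrow> bool" where
  "is_perm n w \<longleftrightarrow> length w = n \<and> distinct w \<and> set w = {1..n}"

end

theory Submission
  imports Defs "HOL-Library.Multiset"
begin

hide_const (open) Multiset.part


definition valid :: "nat \<Rightarrow> nat list \<Rightarrow> (nat \<Rightarrow> nat) \<Rightarrow> bool" where
 "valid k w f \<longleftrightarrow> (\<forall>v\<in>set w. f v \<le> k) \<and>
    (\<forall>i j. i < j \<longrightarrow> j < length w \<longrightarrow> f (w!i) = f (w!j) \<longrightarrow> f (w!i) \<noteq> 0 \<longrightarrow> w!i < w!j)"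

definition cnt :: "nat list \<Rightarrow> (nat \<Rightarrow> nat) \<Rightarrow> nat" where
 "cnt w f = card {v\<in>set w. f v \<noteq> 0}"

definition gr :: "nat \<Rightarrow> nat list \<Rightarrow> nat" where
 "gr k w = Max (cnt w ` {f. valid k w f})"

lemma cnt_le: "cnt w f \<le> length w"
proof -
  have "cnt w f \<le> card (set w)" unfolding cnt_def by (rule card_mono) auto
  also have "\<dots> \<le> length w" by (rule card_length)
  finally show ?thesis .
qed

lemma gr_fin: "finite (cnt w ` {f. valid k w f})"
  by (rule finite_subset[of _ "{..length w}"]) (auto simp: cnt_le)

lemma valid_zero: "valid k w (\<lambda>_. 0)" by (simp add: valid_def)

lemma gr_ge: "valid k w f \<Longrightarrow> cnt w f \<le> gr k w"
  unfolding gr_def by (rule Max_ge[OF gr_fin]) auto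

lemma gr_ex: "\<exists>f. valid k w f \<and> gr k w = cnt w f"
proof -
  have "gr k w \<in> cnt w ` {f. valid k w f}" unfolding gr_def
    by (rule Max_in[OF gr_fin]) (use valid_zero in auto)
  thus ?thesis by auto
qed

lemma gr_leI: assumes "\<And>f. valid k w1 f \<Longrightarrow> \<exists>g. valid k w2 g \<and> cnt w1 f \<le> cnt w2 g"
  shows "gr k w1 \<le> gr k w2"
proof -
  obtain f where "valid k w1 f" "gr k w1 = cnt w1 f" using gr_ex by blast
  with assms obtain g where "valid k w2 g" "cnt w1 f \<le> cnt w2 g" by blast
  thus ?thesis using gr_ge[of k w2 g] \<open>gr k w1 = _\<close> by linarith
qed

lemma valid_before: "valid k w f \<Longrightarrow> i < j \<Longrightarrow> j < length w \<Longrightarrow> f (w!i) = f (w!j) \<Longrightarrow> f (w!i) \<noteq> 0 \<Longrightarrow> w!i < w!j"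
  unfolding valid_def by blast

lemma nth_mid2: "(p@a#b#s)!i = (if i < length p then p!i else if i = length p then a
   else if i = Suc (length p) then b else s!(i - Suc (Suc (length p))))"
  by (auto simp: nth_append nth_Cons')

lemma nth_mid3: "(p@a#b#c#s)!i = (if i < length p then p!i else if i = length p then a
   else if i = Suc (length p) then b else if i = Suc (Suc (length p)) then c else s!(i - Suc (Suc (Suc (length p)))))"
  by (auto simp: nth_append nth_Cons')

lemma swap_valid:
  assumes v: "valid k (p@[a,b]@s) f" and nc: "\<not>(f a = f b \<and> f a \<noteq> 0)"
  shows "valid k (p@[b,a]@s) f"
proof -
  let ?P = "length p"
  define sw where "sw i = (if i = ?P then Suc ?P else if i = Suc ?P then ?P else i)" for i
  have nth: "(p@[b,a]@s)!i = (p@[a,b]@s)!(sw i)" for i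
    unfolding sw_def by (simp add: nth_mid2)
  show ?thesis unfolding valid_def
  proof (intro conjI allI impI)
    show "\<forall>v\<in>set (p @ [b, a] @ s). f v \<le> k" using v unfolding valid_def by auto
  next
    fix i j assume ij: "i < j" "j < length (p @ [b, a] @ s)"
      and eq: "f ((p @ [b, a] @ s) ! i) = f ((p @ [b, a] @ s) ! j)"
      and nz: "f ((p @ [b, a] @ s) ! i) \<noteq> 0"
    show "(p @ [b, a] @ s) ! i < (p @ [b, a] @ s) ! j"
    proof (cases "i = ?P \<and> j = Suc ?P")
      case True
      then show ?thesis using eq nz nc by (auto simp: nth_mid2)
    next
      case False
      then have "sw i < sw j" "sw j < length (p@[a,b]@s)" using ij unfolding sw_def by auto
      then show ?thesis using valid_before[OF v, of "sw i" "sw j"] eq nz unfolding nth by auto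
    qed
  qed
qed

lemma cnt_swap: "cnt (p@[b,a]@s) f = cnt (p@[a,b]@s) f"
  unfolding cnt_def by (simp add: insert_commute)




lemma win3:
  assumes d: "distinct (p@a#b#c#s)" and i: "i < length (p@a#b#c#s)"
  shows "((p@a#b#c#s)!i = a \<longleftrightarrow> i = length p)"
    "((p@a#b#c#s)!i = b \<longleftrightarrow> i = Suc (length p))"
    "((p@a#b#c#s)!i = c \<longleftrightarrow> i = Suc (Suc (length p)))"
    "((p@a#b#c#s)!i \<in> set s \<longleftrightarrow> Suc (Suc (length p)) < i)"
    "((p@a#b#c#s)!i \<in> set p \<longleftrightarrow> i < length p)"
proof -
  let ?w = "p@a#b#c#s"
  have ia: "?w ! length p = a" "?w ! Suc (length p) = b" "?w ! Suc (Suc (length p)) = c"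
    by (simp_all add: nth_mid3)
  have L: "length p < length ?w" "Suc (length p) < length ?w" "Suc (Suc (length p)) < length ?w" by auto
  show "(?w!i = a \<longleftrightarrow> i = length p)"
    using nth_eq_iff_index_eq[OF d i L(1)] ia by auto
  show "(?w!i = b \<longleftrightarrow> i = Suc (length p))"
    using nth_eq_iff_index_eq[OF d i L(2)] ia by auto
  show "(?w!i = c \<longleftrightarrow> i = Suc (Suc (length p)))"
    using nth_eq_iff_index_eq[OF d i L(3)] ia by auto
  show "(?w!i \<in> set s \<longleftrightarrow> Suc (Suc (length p)) < i)"
    using d i by (auto simp: nth_mid3 dest: nth_mem)
  show "(?w!i \<in> set p \<longleftrightarrow> i < length p)"
    using d i by (auto simp: nth_mid3 dest: nth_mem)
qed

lemma k1_hard: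
  assumes xy: "x < y" "y < z" and d: "distinct (p@[y,x,z]@s)" and v: "valid k (p@[y,x,z]@s) f"
  shows "\<exists>g. valid k (p@[y,z,x]@s) g \<and> cnt (p@[y,x,z]@s) f \<le> cnt (p@[y,z,x]@s) g"
proof -
  let ?w = "p@[y,x,z]@s" let ?P = "length p"
  have sw: "valid k ?w g \<Longrightarrow> \<not>(g x = g z \<and> g x \<noteq> 0) \<Longrightarrow> valid k (p@[y,z,x]@s) g" for g
    using swap_valid[of k "p@[y]" x z s g] by simp
  have cs: "cnt (p@[y,z,x]@s) g = cnt ?w g" for g
    using cnt_swap[of "p@[y]" z x s g] by simp
  have d': "distinct (p@y#x#z#s)" using d by simp
  note W = win3[OF d']
  have n: "?w!?P = y" "?w!Suc ?P = x" "?w!Suc(Suc ?P) = z" by (simp_all add: nth_mid3)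
  have lens: "Suc (Suc ?P) < length ?w" by simp
  note V = valid_before[OF v]
  show ?thesis
  proof (cases "f x = f z \<and> f x \<noteq> 0")
    case False
    thus ?thesis using sw[OF v] cs by auto
  next
    case True
    define s0 where "s0 = f x"
    have s0: "f x = s0" "f z = s0" "s0 \<noteq> 0" using True s0_def by auto
    have s0k: "s0 \<le> k" using v s0 unfolding valid_def by auto
    have F1: "\<And>i. i < ?P \<Longrightarrow> f (?w!i) = s0 \<Longrightarrow> ?w!i < x"
      using V[of _ "Suc ?P"] n s0 by auto
    have F4: "\<And>j. Suc (Suc ?P) < j \<Longrightarrow> j < length ?w \<Longrightarrow> f (?w!j) = s0 \<Longrightarrow> z < ?w!j"
      using V[of "Suc (Suc ?P)"] n s0 by auto
    show ?thesis
    proof (cases "f y = 0")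
      case True
      define g where "g = f(y := s0, x := 0)"
      have vg: "valid k ?w g"
        unfolding valid_def
      proof (intro conjI allI impI ballI)
        fix u assume "u \<in> set ?w" thus "g u \<le> k" using v s0k unfolding valid_def g_def by auto
      next
        fix i j assume ij: "i < j" "j < length ?w" and eq: "g (?w!i) = g (?w!j)" and nz: "g (?w!i) \<noteq> 0"
        have il: "i < length (p@y#x#z#s)" "j < length (p@y#x#z#s)" using ij by simp_all
        have Wi: "?w!i = y \<longleftrightarrow> i = ?P" "?w!i = x \<longleftrightarrow> i = Suc ?P" using W[OF il(1)] by simp_all
        have Wj: "?w!j = y \<longleftrightarrow> j = ?P" "?w!j = x \<longleftrightarrow> j = Suc ?P" using W[OF il(2)] by simp_all
        show "?w!i < ?w!j"
        proof (cases "i = ?P")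
          case iP: True
          hence "j \<noteq> Suc ?P" "f (?w!j) = s0" using eq nz Wi Wj ij unfolding g_def by (auto split: if_splits)
          hence "Suc (Suc ?P) \<le> j" using ij iP by auto
          then show ?thesis
          proof (cases "j = Suc (Suc ?P)")
            case True thus ?thesis using iP n xy by simp
          next
            case False
            thus ?thesis using F4[of j] ij \<open>f (?w!j) = s0\<close> \<open>Suc (Suc ?P) \<le> j\<close> iP n xy by auto
          qed
        next
          case inP: False
          have "i \<noteq> Suc ?P" using nz Wi unfolding g_def by auto
          show ?thesis
          proof (cases "j = ?P")
            case True
            hence "f (?w!i) = s0" "i < ?P" using eq nz Wi Wj inP ij unfolding g_def by (auto split: if_splits)
            thus ?thesis using F1[of i] True n xy by auto
          next
            case False
            hence "j \<noteq> Suc ?P" using eq nz Wi Wj inP \<open>i \<noteq> Suc ?P\<close> unfolding g_def by (auto split: if_splits)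
            hence "g (?w!i) = f (?w!i)" "g (?w!j) = f (?w!j)" using Wi Wj inP False \<open>i \<noteq> Suc ?P\<close> unfolding g_def by auto
            thus ?thesis using V[OF ij] eq nz by simp
          qed
        qed
      qed
      have "\<not>(g x = g z \<and> g x \<noteq> 0)" unfolding g_def by simp
      note vg2 = sw[OF vg this]
      have "{u\<in>set ?w. g u \<noteq> 0} = insert y ({u\<in>set ?w. f u \<noteq> 0} - {x})"
        using s0 True xy unfolding g_def by auto
      moreover have A: "finite {u\<in>set ?w. f u \<noteq> 0}" "x \<in> {u\<in>set ?w. f u \<noteq> 0}"
         "y \<notin> {u\<in>set ?w. f u \<noteq> 0} - {x}" using s0 True by auto
      have c1: "card (insert y ({u\<in>set ?w. f u \<noteq> 0} - {x})) = Suc (card ({u\<in>set ?w. f u \<noteq> 0} - {x}))"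
        using A by (intro card_insert_disjoint) auto
      have c2: "Suc (card ({u\<in>set ?w. f u \<noteq> 0} - {x})) = card {u\<in>set ?w. f u \<noteq> 0}"
        using A by (intro card_Suc_Diff1) auto
      ultimately have "cnt ?w g = cnt ?w f" unfolding cnt_def using c1 c2 by simp
      thus ?thesis using vg2 cs[of g] by (intro exI[of _ g]) simp
    next
      case False
      define t where "t = f y"
      have t: "f y = t" "t \<noteq> 0" using False t_def by auto
      have ts: "t \<noteq> s0" using V[of ?P "Suc ?P"] n s0 t xy by auto
      have tk: "t \<le> k" using v t unfolding valid_def by auto
      have F2: "\<And>i. i < ?P \<Longrightarrow> f (?w!i) = t \<Longrightarrow> ?w!i < y"
        using V[of _ "?P"] n t by auto
      have F3: "\<And>j. Suc (Suc ?P) < j \<Longrightarrow> j < length ?w \<Longrightarrow> f (?w!j) = t \<Longrightarrow> y < ?w!j"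
        using V[of "?P"] n t by auto
      define g where "g u = (if u = z then t else if u \<in> set s \<and> f u = t then s0
          else if u \<in> set s \<and> f u = s0 then t else f u)" for u
      have vg: "valid k ?w g"
        unfolding valid_def
      proof (intro conjI allI impI ballI)
        fix u assume "u \<in> set ?w" thus "g u \<le> k" using v s0k tk unfolding valid_def g_def by auto
      next
        fix i j assume ij: "i < j" "j < length ?w" and eq: "g (?w!i) = g (?w!j)" and nz: "g (?w!i) \<noteq> 0"
        have il: "i < length (p@y#x#z#s)" "j < length (p@y#x#z#s)" using ij by simp_all
        note Wi = W[OF il(1)] and Wj = W[OF il(2)]
        have Vf: "f (?w!i) = f (?w!j) \<Longrightarrow> f (?w!i) \<noteq> 0 \<Longrightarrow> ?w!i < ?w!j" using V[OF ij] .
        consider "j \<le> Suc ?P" | "j = Suc (Suc ?P)" | "Suc (Suc ?P) < j" by linarith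
        then show "?w!i < ?w!j"
        proof cases
          case 1
          hence "g (?w!i) = f (?w!i)" "g (?w!j) = f (?w!j)" using Wi Wj ij unfolding g_def by auto
          thus ?thesis using Vf eq nz by simp
        next
          case 2
          hence gj: "g (?w!j) = t" using Wj unfolding g_def by auto
          have "i = ?P \<or> (i < ?P \<and> f (?w!i) = t)"
          proof -
            have "i \<noteq> Suc ?P" using eq gj Wi ts s0 unfolding g_def by auto
            thus ?thesis using ij 2 eq gj Wi unfolding g_def by (auto split: if_splits)
          qed
          thus ?thesis using F2[of i] n 2 xy by auto
        next
          case 3
          have jz: "?w!j \<noteq> z" "?w!j \<in> set s" using Wj 3 by auto
          show ?thesis
          proof (cases "f (?w!j) = t")
            case fjt: True
            hence gj: "g (?w!j) = s0" using jz unfolding g_def by auto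
            consider "i < ?P" | "i = ?P" | "i = Suc ?P" | "i = Suc (Suc ?P)" | "Suc (Suc ?P) < i" by linarith
            thus ?thesis
            proof cases
              case 1
              hence "f (?w!i) = s0" using eq gj Wi ts unfolding g_def by (auto split: if_splits)
              thus ?thesis using F1[of i] 1 F3[of j] 3 ij fjt xy by force
            next
              case 2 thus ?thesis using eq gj Wi ts t unfolding g_def by auto
            next
              case 3 thus ?thesis using F3[of j] \<open>Suc (Suc ?P) < j\<close> ij fjt n xy by auto
            next
              case 4 thus ?thesis using eq gj Wi ts unfolding g_def by auto
            next
              case 5
              hence "f (?w!i) = t" using eq gj Wi ts s0 unfolding g_def by (auto split: if_splits)
              thus ?thesis using Vf fjt t by simp
            qed
          next
            case fjt: False
            show ?thesis
            proof (cases "f (?w!j) = s0")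
              case fjs: True
              hence gj: "g (?w!j) = t" using jz fjt unfolding g_def by auto
              consider "i < ?P" | "i = ?P" | "i = Suc ?P" | "i = Suc (Suc ?P)" | "Suc (Suc ?P) < i" by linarith
              thus ?thesis
              proof cases
                case 1
                hence "f (?w!i) = t" using eq gj Wi ts unfolding g_def by (auto split: if_splits)
                thus ?thesis using F2[of i] 1 F4[of j] 3 ij fjs xy by force
              next
                case 2 thus ?thesis using F4[of j] 3 ij fjs n xy by auto
              next
                case 3 thus ?thesis using eq gj Wi ts s0 unfolding g_def by auto
              next
                case 4 thus ?thesis using F4[of j] 3 ij fjs n xy by auto
              next
                case 5
                hence "f (?w!i) = s0" using eq gj Wi ts s0 unfolding g_def by (auto split: if_splits)
                thus ?thesis using Vf fjs s0 by simp
              qed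
            next
              case fjs: False
              hence gj: "g (?w!j) = f (?w!j)" using jz fjt unfolding g_def by auto
              have "g (?w!i) = f (?w!i)"
                using eq gj Wi fjs fjt unfolding g_def by (auto split: if_splits)
              thus ?thesis using Vf eq gj nz by simp
            qed
          qed
        qed
      qed
      have "\<not>(g x = g z \<and> g x \<noteq> 0)" unfolding g_def using ts s0 d xy by auto
      note vg2 = sw[OF vg this]
      have "{u\<in>set ?w. g u \<noteq> 0} = {u\<in>set ?w. f u \<noteq> 0}"
        using s0 t unfolding g_def by auto
      hence "cnt ?w g = cnt ?w f" unfolding cnt_def by simp
      thus ?thesis using vg2 cs[of g] by (intro exI[of _ g]) simp
    qed
  qed
qed

lemma k2_hard:
  assumes xy: "x < y" "y < z" and d: "distinct (p@[x,z,y]@s)" and v: "valid k (p@[x,z,y]@s) f"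
  shows "\<exists>g. valid k (p@[z,x,y]@s) g \<and> cnt (p@[x,z,y]@s) f \<le> cnt (p@[z,x,y]@s) g"
proof -
  let ?w = "p@[x,z,y]@s" let ?P = "length p"
  have sw: "valid k ?w g \<Longrightarrow> \<not>(g x = g z \<and> g x \<noteq> 0) \<Longrightarrow> valid k (p@[z,x,y]@s) g" for g
    using swap_valid[of k p x z "y#s" g] by simp
  have cs: "cnt (p@[z,x,y]@s) g = cnt ?w g" for g
    using cnt_swap[of p z x "y#s" g] by simp
  have d': "distinct (p@x#z#y#s)" using d by simp
  note W = win3[OF d']
  have n: "?w!?P = x" "?w!Suc ?P = z" "?w!Suc(Suc ?P) = y" by (simp_all add: nth_mid3)
  note V = valid_before[OF v]
  show ?thesis
  proof (cases "f x = f z \<and> f x \<noteq> 0")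
    case False
    thus ?thesis using sw[OF v] cs by auto
  next
    case True
    define s0 where "s0 = f x"
    have s0: "f x = s0" "f z = s0" "s0 \<noteq> 0" using True s0_def by auto
    have s0k: "s0 \<le> k" using v s0 unfolding valid_def by auto
    have F1: "\<And>i. i < ?P \<Longrightarrow> f (?w!i) = s0 \<Longrightarrow> ?w!i < x"
      using V[of _ "?P"] n s0 by auto
    have F4: "\<And>j. Suc (Suc ?P) < j \<Longrightarrow> j < length ?w \<Longrightarrow> f (?w!j) = s0 \<Longrightarrow> z < ?w!j"
      using V[of "Suc ?P"] n s0 by auto
    show ?thesis
    proof (cases "f y = 0")
      case True
      define g where "g = f(y := s0, z := 0)"
      have vg: "valid k ?w g"
        unfolding valid_def
      proof (intro conjI allI impI ballI)
        fix u assume "u \<in> set ?w" thus "g u \<le> k" using v s0k unfolding valid_def g_def by auto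
      next
        fix i j assume ij: "i < j" "j < length ?w" and eq: "g (?w!i) = g (?w!j)" and nz: "g (?w!i) \<noteq> 0"
        have il: "i < length (p@x#z#y#s)" "j < length (p@x#z#y#s)" using ij by simp_all
        have Wi: "?w!i = y \<longleftrightarrow> i = Suc (Suc ?P)" "?w!i = z \<longleftrightarrow> i = Suc ?P" using W[OF il(1)] by simp_all
        have Wj: "?w!j = y \<longleftrightarrow> j = Suc (Suc ?P)" "?w!j = z \<longleftrightarrow> j = Suc ?P" using W[OF il(2)] by simp_all
        have iz: "i \<noteq> Suc ?P" using nz Wi unfolding g_def by auto
        have jz: "j \<noteq> Suc ?P" using nz eq Wj unfolding g_def by auto
        show "?w!i < ?w!j"
        proof (cases "i = Suc (Suc ?P)")
          case iP: True
          hence "f (?w!j) = s0" "Suc (Suc ?P) < j" using eq nz Wi Wj ij unfolding g_def by (auto split: if_splits)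
          thus ?thesis using F4[of j] ij iP n xy by auto
        next
          case inP: False
          show ?thesis
          proof (cases "j = Suc (Suc ?P)")
            case True
            hence "f (?w!i) = s0" "i \<le> ?P" using eq nz Wi Wj inP ij iz unfolding g_def by (auto split: if_splits)
            thus ?thesis using F1[of i] True n xy by (cases "i = ?P") auto
          next
            case False
            hence "g (?w!i) = f (?w!i)" "g (?w!j) = f (?w!j)" using Wi Wj inP False iz jz unfolding g_def by auto
            thus ?thesis using V[OF ij] eq nz by simp
          qed
        qed
      qed
      have "\<not>(g x = g z \<and> g x \<noteq> 0)" unfolding g_def by auto
      note vg2 = sw[OF vg this]
      have "{u\<in>set ?w. g u \<noteq> 0} = insert y ({u\<in>set ?w. f u \<noteq> 0} - {z})"
        using s0 True xy unfolding g_def by auto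
      moreover have A: "finite {u\<in>set ?w. f u \<noteq> 0}" "z \<in> {u\<in>set ?w. f u \<noteq> 0}"
         "y \<notin> {u\<in>set ?w. f u \<noteq> 0} - {z}" using s0 True by auto
      have c1: "card (insert y ({u\<in>set ?w. f u \<noteq> 0} - {z})) = Suc (card ({u\<in>set ?w. f u \<noteq> 0} - {z}))"
        using A by (intro card_insert_disjoint) auto
      have c2: "Suc (card ({u\<in>set ?w. f u \<noteq> 0} - {z})) = card {u\<in>set ?w. f u \<noteq> 0}"
        using A by (intro card_Suc_Diff1) auto
      ultimately have "cnt ?w g = cnt ?w f" unfolding cnt_def using c1 c2 by simp
      thus ?thesis using vg2 cs[of g] by (intro exI[of _ g]) simp
    next
      case False
      define t where "t = f y"
      have t: "f y = t" "t \<noteq> 0" using False t_def by auto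
      have ts: "t \<noteq> s0" using V[of "Suc ?P" "Suc (Suc ?P)"] n s0 t xy by auto
      have tk: "t \<le> k" using v t unfolding valid_def by auto
      have F2: "\<And>i. i < ?P \<Longrightarrow> f (?w!i) = t \<Longrightarrow> ?w!i < y"
        using V[of _ "Suc (Suc ?P)"] n t by auto
      have F3: "\<And>j. Suc (Suc ?P) < j \<Longrightarrow> j < length ?w \<Longrightarrow> f (?w!j) = t \<Longrightarrow> y < ?w!j"
        using V[of "Suc (Suc ?P)"] n t by auto
      define g where "g u = (if u = z then t else if u = y then s0 else if u \<in> set s \<and> f u = t then s0
          else if u \<in> set s \<and> f u = s0 then t else f u)" for u
      have vg: "valid k ?w g"
        unfolding valid_def
      proof (intro conjI allI impI ballI)
        fix u assume "u \<in> set ?w" thus "g u \<le> k" using v s0k tk unfolding valid_def g_def by auto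
      next
        fix i j assume ij: "i < j" "j < length ?w" and eq: "g (?w!i) = g (?w!j)" and nz: "g (?w!i) \<noteq> 0"
        have il: "i < length (p@x#z#y#s)" "j < length (p@x#z#y#s)" using ij by simp_all
        note Wi = W[OF il(1)] and Wj = W[OF il(2)]
        have Vf: "f (?w!i) = f (?w!j) \<Longrightarrow> f (?w!i) \<noteq> 0 \<Longrightarrow> ?w!i < ?w!j" using V[OF ij] .
        consider "j \<le> ?P" | "j = Suc ?P" | "j = Suc (Suc ?P)" | "Suc (Suc ?P) < j" by linarith
        then show "?w!i < ?w!j"
        proof cases
          case 1
          hence "g (?w!i) = f (?w!i)" "g (?w!j) = f (?w!j)" using Wi Wj ij unfolding g_def by auto
          thus ?thesis using Vf eq nz by simp
        next
          case 2
          hence gj: "g (?w!j) = t" using Wj unfolding g_def by auto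
          have "i < ?P \<and> f (?w!i) = t"
          proof -
            have "i \<noteq> ?P" using eq gj Wi ts s0 n unfolding g_def by auto
            thus ?thesis using ij 2 eq gj Wi unfolding g_def by (auto split: if_splits)
          qed
          thus ?thesis using F2[of i] n 2 xy by auto
        next
          case 3
          hence gj: "g (?w!j) = s0" using Wj xy unfolding g_def by auto
          have "i \<noteq> Suc ?P" using eq gj Wi ts unfolding g_def by auto
          hence "i = ?P \<or> (i < ?P \<and> f (?w!i) = s0)"
            using ij 3 eq gj Wi unfolding g_def by (auto split: if_splits)
          thus ?thesis using F1[of i] n 3 xy by auto
        next
          case 4
          note j4 = 4
          have jz: "?w!j \<noteq> z" "?w!j \<noteq> y" "?w!j \<in> set s" using Wj 4 by auto
          show ?thesis
          proof (cases "f (?w!j) = t")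
            case fjt: True
            hence gj: "g (?w!j) = s0" using jz unfolding g_def by auto
            consider "i < ?P" | "i = ?P" | "i = Suc ?P" | "i = Suc (Suc ?P)" | "Suc (Suc ?P) < i" by linarith
            thus ?thesis
            proof cases
              case 1
              hence "f (?w!i) = s0" using eq gj Wi ts unfolding g_def by (auto split: if_splits)
              thus ?thesis using F1[of i] 1 F3[of j] j4 ij fjt xy by force
            next
              case 2 thus ?thesis using F3[of j] j4 ij fjt n xy by auto
            next
              case 3 thus ?thesis using eq gj Wi ts unfolding g_def by auto
            next
              case 4 thus ?thesis using F3[of j] j4 ij fjt n xy by auto
            next
              case 5
              hence "f (?w!i) = t" using eq gj Wi ts s0 unfolding g_def by (auto split: if_splits)
              thus ?thesis using Vf fjt t by simp
            qed
          next
            case fjt: False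
            show ?thesis
            proof (cases "f (?w!j) = s0")
              case fjs: True
              hence gj: "g (?w!j) = t" using jz fjt unfolding g_def by auto
              consider "i < ?P" | "i = ?P" | "i = Suc ?P" | "i = Suc (Suc ?P)" | "Suc (Suc ?P) < i" by linarith
              thus ?thesis
              proof cases
                case 1
                hence "f (?w!i) = t" using eq gj Wi ts unfolding g_def by (auto split: if_splits)
                thus ?thesis using F2[of i] 1 F4[of j] j4 ij fjs xy by force
              next
                case 2 thus ?thesis using eq gj Wi ts s0 unfolding g_def by auto
              next
                case 3 thus ?thesis using F4[of j] j4 ij fjs n xy by auto
              next
                case 4 thus ?thesis using eq gj Wi ts s0 unfolding g_def by auto
              next
                case 5
                hence "f (?w!i) = s0" using eq gj Wi ts s0 unfolding g_def by (auto split: if_splits)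
                thus ?thesis using Vf fjs s0 by simp
              qed
            next
              case fjs: False
              hence gj: "g (?w!j) = f (?w!j)" using jz fjt unfolding g_def by auto
              have "g (?w!i) = f (?w!i)"
                using eq gj Wi fjs fjt ts s0 unfolding g_def by (auto split: if_splits)
              thus ?thesis using Vf eq gj nz by simp
            qed
          qed
        qed
      qed
      have "\<not>(g x = g z \<and> g x \<noteq> 0)" unfolding g_def using ts s0 d xy by auto
      note vg2 = sw[OF vg this]
      have "{u\<in>set ?w. g u \<noteq> 0} = {u\<in>set ?w. f u \<noteq> 0}"
        using s0 t unfolding g_def by auto
      hence "cnt ?w g = cnt ?w f" unfolding cnt_def by simp
      thus ?thesis using vg2 cs[of g] by (intro exI[of _ g]) simp
    qed
  qed
qed




definition kmove :: "nat list \<Rightarrow> nat list \<Rightarrow> bool" where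
 "kmove w1 w2 \<longleftrightarrow> (\<exists>p s x y z. x < y \<and> y < z \<and>
    ((w1 = p@[y,x,z]@s \<and> w2 = p@[y,z,x]@s) \<or> (w1 = p@[y,z,x]@s \<and> w2 = p@[y,x,z]@s) \<or>
     (w1 = p@[x,z,y]@s \<and> w2 = p@[z,x,y]@s) \<or> (w1 = p@[z,x,y]@s \<and> w2 = p@[x,z,y]@s)))"

lemma kmove_mset: "kmove w1 w2 \<Longrightarrow> mset w1 = mset w2"
  unfolding kmove_def by (auto simp: add_mset_commute)

lemma kmove_sym: "kmove w1 w2 \<Longrightarrow> kmove w2 w1"
  unfolding kmove_def by blast

lemma kmove_ctx: "kmove w1 w2 \<Longrightarrow> kmove (a@w1@b) (a@w2@b)"
  unfolding kmove_def
  apply (elim exE conjE)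
  subgoal for p s x y z
    by (rule exI[of _ "a@p"], rule exI[of _ "s@b"], rule exI[of _ x], rule exI[of _ y], rule exI[of _ z]) auto
  done

lemma kmove_gr_le: assumes "kmove w1 w2" "distinct w1" shows "gr k w1 \<le> gr k w2"
proof -
  obtain p s x y z where xyz: "x < y" "y < z" and
    c: "(w1 = p@[y,x,z]@s \<and> w2 = p@[y,z,x]@s) \<or> (w1 = p@[y,z,x]@s \<and> w2 = p@[y,x,z]@s) \<or>
     (w1 = p@[x,z,y]@s \<and> w2 = p@[z,x,y]@s) \<or> (w1 = p@[z,x,y]@s \<and> w2 = p@[x,z,y]@s)"
    using assms(1) unfolding kmove_def by blast
  from c show ?thesis
  proof (elim disjE conjE)
    assume "w1 = p@[y,x,z]@s" "w2 = p@[y,z,x]@s"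
    thus ?thesis using k1_hard[OF xyz] assms(2) by (intro gr_leI) auto
  next
    assume "w1 = p@[x,z,y]@s" "w2 = p@[z,x,y]@s"
    thus ?thesis using k2_hard[OF xyz] assms(2) by (intro gr_leI) auto
  next
    assume e: "w1 = p@[y,z,x]@s" "w2 = p@[y,x,z]@s"
    show ?thesis
    proof (rule gr_leI)
      fix f assume v: "valid k w1 f"
      have "\<not>(f z = f x \<and> f z \<noteq> 0)"
        using valid_before[OF v, of "Suc (length p)" "Suc (Suc (length p))"] e xyz
        by (auto simp: nth_mid3)
      hence "valid k ((p@[y])@[x,z]@s) f" using swap_valid[of k "p@[y]" z x s f] v e by simp
      moreover have "cnt w1 f = cnt w2 f" using cnt_swap[of "p@[y]" z x s f] e by simp
      ultimately show "\<exists>g. valid k w2 g \<and> cnt w1 f \<le> cnt w2 g" using e by auto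
    qed
  next
    assume e: "w1 = p@[z,x,y]@s" "w2 = p@[x,z,y]@s"
    show ?thesis
    proof (rule gr_leI)
      fix f assume v: "valid k w1 f"
      have "\<not>(f z = f x \<and> f z \<noteq> 0)"
        using valid_before[OF v, of "length p" "Suc (length p)"] e xyz
        by (auto simp: nth_mid3)
      hence "valid k (p@[x,z]@(y#s)) f" using swap_valid[of k p z x "y#s" f] v e by simp
      moreover have "cnt w1 f = cnt w2 f" using cnt_swap[of p z x "y#s" f] e by simp
      ultimately show "\<exists>g. valid k w2 g \<and> cnt w1 f \<le> cnt w2 g" using e by auto
    qed
  qed
qed

lemma kmove_gr: "kmove w1 w2 \<Longrightarrow> distinct w1 \<Longrightarrow> gr k w1 = gr k w2"
proof -
  assume a: "kmove w1 w2" "distinct w1"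
  hence "distinct w2" using kmove_mset[OF a(1)] using mset_eq_imp_distinct_iff by blast
  thus ?thesis using kmove_gr_le[OF a] kmove_gr_le[OF kmove_sym[OF a(1)]] by (simp add: antisym)
qed

inductive knuth :: "nat list \<Rightarrow> nat list \<Rightarrow> bool" where
  knuth_refl: "knuth w w"
| knuth_step: "knuth w1 w2 \<Longrightarrow> kmove w2 w3 \<Longrightarrow> knuth w1 w3"

lemma knuth_trans: "knuth w2 w3 \<Longrightarrow> knuth w1 w2 \<Longrightarrow> knuth w1 w3"
  by (induction rule: knuth.induct) (auto intro: knuth_step)

lemma knuth_move: "kmove w1 w2 \<Longrightarrow> knuth w1 w2"
  using knuth_step[OF knuth_refl] .

lemma knuth_ctx: "knuth w1 w2 \<Longrightarrow> knuth (a@w1@b) (a@w2@b)"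
  by (induction rule: knuth.induct) (auto intro: knuth_step kmove_ctx knuth_refl)

lemma knuth_mset: "knuth w1 w2 \<Longrightarrow> mset w1 = mset w2"
  by (induction rule: knuth.induct) (auto dest: kmove_mset)

lemma knuth_gr: "knuth w1 w2 \<Longrightarrow> distinct w1 \<Longrightarrow> gr k w1 = gr k w2"
proof (induction rule: knuth.induct)
  case (knuth_refl w) thus ?case by simp
next
  case (knuth_step w1 w2 w3)
  have "distinct w2" using knuth_mset[OF knuth_step(1)] knuth_step(4)
    using mset_eq_imp_distinct_iff by blast
  thus ?case using knuth_step kmove_gr by simp
qed

lemma D1: "x < c \<Longrightarrow> sorted_wrt (<) v \<Longrightarrow> \<forall>e\<in>set v. c < e \<Longrightarrow> knuth (c # v @ [x]) (c # x # v)"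
proof (induction v rule: rev_induct)
  case Nil thus ?case by (simp add: knuth_refl)
next
  case (snoc e v0)
  define l where "l = last (c#v0)"
  have cl: "c#v0 = butlast (c#v0) @ [l]" unfolding l_def by simp
  have "l \<in> set (c#v0)" unfolding l_def by (rule last_in_set) simp
  hence xl: "x < l" "l < e" using snoc.prems by (auto simp: sorted_wrt_append)
  obtain q where q: "c#v0 = q @ [l]" using cl by blast
  have e1: "c # (v0 @ [e]) @ [x] = q @ [l,e,x] @ []"
  proof -
    have "c # (v0 @ [e]) @ [x] = (c#v0) @ [e,x]" by simp
    thus ?thesis using q by simp
  qed
  have e2: "(c # v0 @ [x]) @ [e] = q @ [l,x,e] @ []"
  proof -
    have "(c # v0 @ [x]) @ [e] = (c#v0) @ [x,e]" by simp
    thus ?thesis using q by simp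
  qed
  have "kmove (q @ [l,e,x] @ []) (q @ [l,x,e] @ [])"
    unfolding kmove_def using xl by blast
  hence m: "knuth (c # (v0 @ [e]) @ [x]) ((c # v0 @ [x]) @ [e])"
    unfolding e1 e2 by (rule knuth_move)
  have "knuth ([] @ (c # v0 @ [x]) @ [e]) ([] @ (c # x # v0) @ [e])"
    by (rule knuth_ctx, rule snoc.IH) (use snoc.prems in \<open>auto simp: sorted_wrt_append\<close>)
  hence "knuth ((c # v0 @ [x]) @ [e]) (c # x # v0 @ [e])" by simp
  thus ?case using m knuth_trans by blast
qed

lemma D2: "sorted_wrt (<) u \<Longrightarrow> \<forall>e\<in>set u. e < x \<Longrightarrow> x < b \<Longrightarrow> knuth (u @ [b, x]) (b # u @ [x])"
proof (induction u arbitrary: x rule: rev_induct)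
  case Nil thus ?case by (simp add: knuth_refl)
next
  case (snoc a u0)
  have ax: "a < x" using snoc.prems by auto
  have "kmove (u0 @ [a,b,x] @ []) (u0 @ [b,a,x] @ [])"
    unfolding kmove_def using ax snoc.prems(3) by blast
  hence m: "knuth ((u0 @ [a]) @ [b, x]) ((u0 @ [b, a]) @ [x])" by (simp add: knuth_move)
  have "knuth ([] @ (u0 @ [b, a]) @ [x]) ([] @ (b # u0 @ [a]) @ [x])"
    by (rule knuth_ctx, rule snoc.IH) (use snoc.prems ax in \<open>auto simp: sorted_wrt_append\<close>)
  hence "knuth ((u0 @ [b, a]) @ [x]) (b # (u0 @ [a]) @ [x])" by simp
  thus ?case using m knuth_trans by blast
qed

lemma row_ins_cases:
  "sorted_wrt (<) r \<Longrightarrow> x \<notin> set r \<Longrightarrow>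
   (row_ins x r = (None, r@[x]) \<and> (\<forall>e\<in>set r. e < x)) \<or>
   (\<exists>u b v. r = u@b#v \<and> row_ins x r = (Some b, u@x#v) \<and> (\<forall>e\<in>set u. e < x) \<and> x < b)"
proof (induction r)
  case Nil thus ?case by simp
next
  case (Cons y ys)
  show ?case
  proof (cases "x < y")
    case True
    thus ?thesis by (intro disjI2 exI[of _ "[]"] exI[of _ y] exI[of _ ys]) simp
  next
    case False
    hence yx: "y < x" using Cons.prems by auto
    from Cons.IH Cons.prems have "(row_ins x ys = (None, ys@[x]) \<and> (\<forall>e\<in>set ys. e < x)) \<or>
      (\<exists>u b v. ys = u@b#v \<and> row_ins x ys = (Some b, u@x#v) \<and> (\<forall>e\<in>set u. e < x) \<and> x < b)" by auto
    thus ?thesis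
    proof
      assume "row_ins x ys = (None, ys@[x]) \<and> (\<forall>e\<in>set ys. e < x)"
      thus ?thesis using False yx by simp
    next
      assume "\<exists>u b v. ys = u@b#v \<and> row_ins x ys = (Some b, u@x#v) \<and> (\<forall>e\<in>set u. e < x) \<and> x < b"
      then obtain u b v where "ys = u@b#v" "row_ins x ys = (Some b, u@x#v)" "\<forall>e\<in>set u. e < x" "x < b" by blast
      thus ?thesis using False yx by (intro disjI2 exI[of _ "y#u"] exI[of _ b] exI[of _ v]) simp
    qed
  qed
qed

definition reading :: "nat list list \<Rightarrow> nat list" where
  "reading T = concat (rev T)"

lemma reading_simps[simp]: "reading [] = []" "reading (r#rs) = reading rs @ r"
  by (simp_all add: reading_def)

lemma D: "\<forall>r\<in>set T. sorted_wrt (<) r \<Longrightarrow> distinct (concat T) \<Longrightarrow> x \<notin> set (concat T) \<Longrightarrow>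
   knuth (reading T @ [x]) (reading (tab_ins x T))"
proof (induction T arbitrary: x)
  case Nil thus ?case by (simp add: knuth_refl)
next
  case (Cons r rs)
  have sr: "sorted_wrt (<) r" and xr: "x \<notin> set r" using Cons.prems by auto
  from row_ins_cases[OF sr xr] show ?case
  proof
    assume "row_ins x r = (None, r@[x]) \<and> (\<forall>e\<in>set r. e < x)"
    thus ?case by (simp add: knuth_refl)
  next
    assume "\<exists>u b v. r = u@b#v \<and> row_ins x r = (Some b, u@x#v) \<and> (\<forall>e\<in>set u. e < x) \<and> x < b"
    then obtain u b v where r: "r = u@b#v" and ri: "row_ins x r = (Some b, u@x#v)"
      and ux: "\<forall>e\<in>set u. e < x" and xb: "x < b" by blast
    have su: "sorted_wrt (<) u" and sv: "sorted_wrt (<) v" and bv: "\<forall>e\<in>set v. b < e"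
      using sr r by (auto simp: sorted_wrt_append)
    have s1: "knuth ((reading rs @ u) @ (b # v @ [x]) @ []) ((reading rs @ u) @ (b # x # v) @ [])"
      by (rule knuth_ctx, rule D1[OF xb sv bv])
    have s2: "knuth ((reading rs) @ (u @ [b, x]) @ v) ((reading rs) @ (b # u @ [x]) @ v)"
      by (rule knuth_ctx, rule D2[OF su ux xb])
    have bnot: "b \<notin> set (concat rs)" using Cons.prems(2) r by auto
    have s3: "knuth ([] @ (reading rs @ [b]) @ (u @ x # v)) ([] @ reading (tab_ins b rs) @ (u @ x # v))"
      by (rule knuth_ctx, rule Cons.IH) (use Cons.prems bnot in auto)
    have "knuth (reading (r # rs) @ [x]) ((reading rs @ u) @ (b # x # v))" using s1 r by simp
    moreover have "knuth ((reading rs @ u) @ (b # x # v)) (reading rs @ [b] @ (u @ x # v))" using s2 by simp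
    moreover have "knuth (reading rs @ [b] @ (u @ x # v)) (reading (tab_ins x (r # rs)))" using s3 ri by simp
    ultimately show ?case using knuth_trans by blast
  qed
qed




definition fits :: "nat list \<Rightarrow> nat list \<Rightarrow> bool" where
  "fits r s \<longleftrightarrow> length s \<le> length r \<and> (\<forall>c<length s. r!c < s!c)"

fun tab :: "nat list list \<Rightarrow> bool" where
  "tab [] = True"
| "tab [r] = sorted_wrt (<) r"
| "tab (r#s#rs) = (sorted_wrt (<) r \<and> fits r s \<and> tab (s#rs))"

lemma tab_Cons: "tab (r#T) \<longleftrightarrow> sorted_wrt (<) r \<and> (T \<noteq> [] \<longrightarrow> fits r (hd T)) \<and> tab T"
  by (cases T) auto

lemma tab_sorted: "tab T \<Longrightarrow> r \<in> set T \<Longrightarrow> sorted_wrt (<) r"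
  by (induction T rule: tab.induct) auto

lemma tab_ins_ne: "tab_ins x T \<noteq> []"
  by (cases T) (auto split: option.splits prod.splits)

lemma row_ins_mset: "row_ins x r = (bo, r') \<Longrightarrow>
   mset r' + (case bo of None \<Rightarrow> {#} | Some b \<Rightarrow> {#b#}) = mset r + {#x#}"
  by (induction x r arbitrary: bo r' rule: row_ins.induct) (auto split: if_splits prod.splits option.splits)

lemma tab_ins_mset: "mset (concat (tab_ins x T)) = mset (concat T) + {#x#}"
proof (induction x T rule: tab_ins.induct)
  case (1 x) thus ?case by simp
next
  case (2 x r rs)
  show ?case
  proof (cases "row_ins x r")
    case (Pair bo r')
    show ?thesis
    proof (cases bo)
      case None thus ?thesis using Pair row_ins_mset[OF Pair] by simp
    next
      case (Some b)
      thus ?thesis using Pair row_ins_mset[OF Pair] 2[OF Pair[symmetric] Some]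
        by (simp add: ac_simps)
    qed
  qed
qed

lemma len_takeWhile_le: "i < length s \<Longrightarrow> \<not> P (s!i) \<Longrightarrow> length (takeWhile P s) \<le> i"
proof (induction s arbitrary: i)
  case Nil thus ?case by simp
next
  case (Cons a s) thus ?case by (cases i) auto
qed

definition Cnd :: "nat list \<Rightarrow> nat \<Rightarrow> nat list list \<Rightarrow> bool" where
  "Cnd q x rs \<longleftrightarrow> (let c = length (takeWhile (\<lambda>e. e < x) (case rs of [] \<Rightarrow> [] | r#_ \<Rightarrow> r))
     in c < length q \<and> q!c < x)"

lemma E: "tab rs \<Longrightarrow> distinct (concat rs) \<Longrightarrow> x \<notin> set (concat rs) \<Longrightarrow>
  tab (tab_ins x rs) \<and> (\<forall>q. sorted_wrt (<) q \<and> (rs \<noteq> [] \<longrightarrow> fits q (hd rs)) \<and> Cnd q x rs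
      \<longrightarrow> fits q (hd (tab_ins x rs)))"
proof (induction rs arbitrary: x)
  case Nil
  thus ?case by (auto simp: Cnd_def fits_def Suc_le_eq)
next
  case (Cons r rs')
  have sr: "sorted_wrt (<) r" and xr: "x \<notin> set r" and trs: "tab rs'"
    and fr: "rs' \<noteq> [] \<Longrightarrow> fits r (hd rs')"
    using Cons.prems by (auto simp: tab_Cons)
  from row_ins_cases[OF sr xr] show ?case
  proof
    assume a: "row_ins x r = (None, r@[x]) \<and> (\<forall>e\<in>set r. e < x)"
    hence ti: "tab_ins x (r#rs') = (r@[x]) # rs'" by simp
    have srx: "sorted_wrt (<) (r@[x])" using sr a by (simp add: sorted_wrt_append)
    have f1: "rs' \<noteq> [] \<Longrightarrow> fits (r@[x]) (hd rs')" using fr unfolding fits_def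
      by (auto simp: nth_append)
    have tw: "takeWhile (\<lambda>e. e < x) r = r" using a by simp
    have f2: "fits q (r@[x])" if "sorted_wrt (<) q" "fits q r" "Cnd q x (r#rs')" for q
    proof -
      have c: "length r < length q" "q ! length r < x" using that(3) tw unfolding Cnd_def Let_def by auto
      show ?thesis unfolding fits_def
      proof (intro conjI allI impI)
        show "length (r@[x]) \<le> length q" using c by simp
      next
        fix c' assume "c' < length (r@[x])"
        show "q!c' < (r@[x])!c'"
        proof (cases "c' < length r")
          case False
          hence "c' = length r" using \<open>c' < length (r@[x])\<close> by simp
          thus ?thesis using c by simp
        next
          case True
          hence "q!c' < r!c'" using that(2) unfolding fits_def by blast
          thus ?thesis using True by (simp add: nth_append)
        qed
      qed
    qed
    show ?case unfolding ti using srx f1 trs f2 by (auto simp: tab_Cons)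
  next
    assume "\<exists>u b v. r = u@b#v \<and> row_ins x r = (Some b, u@x#v) \<and> (\<forall>e\<in>set u. e < x) \<and> x < b"
    then obtain u b v where r: "r = u@b#v" and ri: "row_ins x r = (Some b, u@x#v)"
      and ux: "\<forall>e\<in>set u. e < x" and xb: "x < b" by blast
    define r' where "r' = u@x#v"
    have ti: "tab_ins x (r#rs') = r' # tab_ins b rs'" using ri r'_def by simp
    have bnot: "b \<notin> set (concat rs')" "distinct (concat rs')" using Cons.prems(2) r by auto
    note IH = Cons.IH[OF trs bnot(2) bnot(1)]
    have sr': "sorted_wrt (<) r'" using sr r ux xb unfolding r'_def
      by (auto simp: sorted_wrt_append)
    have lr: "length r' = length r" unfolding r'_def r by simp
    have r'n: "r'!c = (if c = length u then x else r!c)" for c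
      unfolding r'_def r by (cases "c < length u") (auto simp: nth_append nth_Cons')
    have rb: "r ! length u = b" unfolding r by simp
    have fr': "fits r' (hd rs')" if "rs' \<noteq> []"
    proof -
      have F: "fits r (hd rs')" using fr[OF that] .
      show ?thesis unfolding fits_def
      proof (intro conjI allI impI)
        show "length (hd rs') \<le> length r'" using F lr unfolding fits_def by simp
      next
        fix c assume c: "c < length (hd rs')"
        hence rc: "r!c < hd rs' ! c" using F unfolding fits_def by blast
        show "r'!c < hd rs' ! c"
        proof (cases "c = length u")
          case True thus ?thesis using r'n[of c] rc rb xb by simp
        next
          case False thus ?thesis using r'n[of c] rc by simp
        qed
      qed
    qed
    have cnd: "Cnd r' b rs'"
    proof -
      define s where "s = (case rs' of [] \<Rightarrow> [] | r#_ \<Rightarrow> r)"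
      have c2: "length (takeWhile (\<lambda>e. e < b) s) \<le> length u"
      proof (cases "length u < length s")
        case True
        hence "rs' \<noteq> []" "s = hd rs'" unfolding s_def by (auto split: list.splits)
        hence "r ! length u < s ! length u" using fr True unfolding fits_def by auto
        hence "\<not> s ! length u < b" using rb by simp
        thus ?thesis using len_takeWhile_le[OF True, of "\<lambda>e. e < b"] by simp
      next
        case False
        thus ?thesis using length_takeWhile_le[of _ s] by (meson le_trans not_le_imp_less less_imp_le_nat)
      qed
      have "r' ! length (takeWhile (\<lambda>e. e < b) s) < b"
      proof (cases "length (takeWhile (\<lambda>e. e < b) s) = length u")
        case True thus ?thesis using r'n xb by simp
      next
        case False
        hence lt: "length (takeWhile (\<lambda>e. e < b) s) < length u" using c2 by simp
        hence "r' ! length (takeWhile (\<lambda>e. e < b) s) = u ! length (takeWhile (\<lambda>e. e < b) s)"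
          unfolding r'_def by (simp add: nth_append)
        moreover have "u ! length (takeWhile (\<lambda>e. e < b) s) \<in> set u" using lt by simp
        ultimately show ?thesis using ux xb by fastforce
      qed
      moreover have "length (takeWhile (\<lambda>e. e < b) s) < length r'" using c2 unfolding r'_def by simp
      ultimately show ?thesis unfolding Cnd_def Let_def s_def by simp
    qed
    have IH2: "fits q (hd (tab_ins b rs'))" if "sorted_wrt (<) q" "rs' \<noteq> [] \<longrightarrow> fits q (hd rs')" "Cnd q b rs'" for q
      using IH that by blast
    have fh: "fits r' (hd (tab_ins b rs'))" by (rule IH2[OF sr' _ cnd]) (use fr' in blast)
    have f2: "fits q r'" if "sorted_wrt (<) q" "fits q r" "Cnd q x (r#rs')" for q
    proof -
      have tw: "takeWhile (\<lambda>e. e < x) r = u" unfolding r using ux xb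
        by (simp add: takeWhile_append2)
      have c: "length u < length q" "q ! length u < x" using that(3) tw unfolding Cnd_def Let_def by auto
      show ?thesis unfolding fits_def
      proof (intro conjI allI impI)
        show "length r' \<le> length q" using that(2) lr unfolding fits_def by simp
      next
        fix c' assume "c' < length r'"
        thus "q!c' < r'!c'" using that(2) c lr unfolding fits_def r'n by auto
      qed
    qed
    show ?case unfolding ti using sr' fh IH tab_ins_ne[of b rs'] f2 by (auto simp: tab_Cons)
  qed
qed

lemma tab_tab_ins: "tab T \<Longrightarrow> distinct (concat T) \<Longrightarrow> x \<notin> set (concat T) \<Longrightarrow> tab (tab_ins x T)"
  using E by blast

lemma rsk_P_Nil: "rsk_P [] = []" by (simp add: rsk_P_def)
lemma rsk_P_snoc: "rsk_P (w@[x]) = tab_ins x (rsk_P w)" by (simp add: rsk_P_def)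

lemma rsk_inv: "distinct w \<Longrightarrow> tab (rsk_P w) \<and> mset (concat (rsk_P w)) = mset w \<and> knuth w (reading (rsk_P w))"
proof (induction w rule: rev_induct)
  case Nil thus ?case by (simp add: rsk_P_Nil knuth_refl)
next
  case (snoc x w)
  have IH: "tab (rsk_P w)" "mset (concat (rsk_P w)) = mset w" "knuth w (reading (rsk_P w))"
    using snoc by auto
  have dc: "distinct (concat (rsk_P w))" using IH(2) snoc.prems
    by (metis distinct_append mset_eq_imp_distinct_iff)
  have xn: "x \<notin> set (concat (rsk_P w))" using IH(2) snoc.prems
    by (metis distinct_append disjoint_iff list.set_intros(1) mset_eq_setD)
  have t: "tab (rsk_P (w@[x]))" unfolding rsk_P_snoc by (rule tab_tab_ins[OF IH(1) dc xn])
  have m: "mset (concat (rsk_P (w@[x]))) = mset (w@[x])" unfolding rsk_P_snoc tab_ins_mset IH(2) by simp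
  have k1: "knuth ([] @ w @ [x]) ([] @ reading (rsk_P w) @ [x])" by (rule knuth_ctx[OF IH(3)])
  have k2: "knuth (reading (rsk_P w) @ [x]) (reading (rsk_P (w@[x])))" unfolding rsk_P_snoc
    by (rule D[OF _ dc xn]) (use IH(1) tab_sorted in blast)
  show ?case using t m k1 k2 knuth_trans by auto
qed




definition rs :: "nat list list \<Rightarrow> nat \<Rightarrow> nat" where
  "rs T k = (\<Sum>i<k. if i < length T then length (T!i) else 0)"

lemma lowerF: "\<forall>r\<in>set T. sorted_wrt (<) r \<Longrightarrow> distinct (reading T) \<Longrightarrow>
  \<exists>f. valid k (reading T) f \<and> rs T k \<le> cnt (reading T) f"
proof (induction T arbitrary: k)
  case Nil thus ?case using valid_zero by (auto simp: rs_def)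
next
  case (Cons r T)
  show ?case
  proof (cases k)
    case 0 thus ?thesis using valid_zero by (auto simp: rs_def)
  next
    case (Suc k')
    have dT: "distinct (reading T)" and dr: "distinct r" and disj: "set (reading T) \<inter> set r = {}"
      using Cons.prems by auto
    have sr: "sorted_wrt (<) r" using Cons.prems by auto
    obtain f' where v': "valid k' (reading T) f'" and c': "rs T k' \<le> cnt (reading T) f'"
      using Cons.IH[OF _ dT, of k'] Cons.prems by auto
    define f where "f v = (if v \<in> set r then Suc k' else f' v)" for v
    let ?w = "reading T @ r"
    have vf: "valid k ?w f" unfolding valid_def
    proof (intro conjI allI impI ballI)
      fix v assume "v \<in> set ?w" thus "f v \<le> k" using v' Suc unfolding valid_def f_def by auto
    next
      fix i j assume ij: "i < j" "j < length ?w" and eq: "f (?w!i) = f (?w!j)" and nz: "f (?w!i) \<noteq> 0"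
      let ?L = "length (reading T)"
      show "?w!i < ?w!j"
      proof (cases "j < ?L")
        case True
        hence wi: "?w!i = reading T ! i" "?w!j = reading T ! j" using ij by (auto simp: nth_append)
        have "reading T ! i \<in> set (reading T)" "reading T ! j \<in> set (reading T)" using True ij by simp_all
        hence "reading T ! i \<notin> set r" "reading T ! j \<notin> set r" using disj by blast+
        hence "f' (reading T ! i) = f' (reading T ! j)" "f' (reading T ! i) \<noteq> 0" using eq nz wi unfolding f_def by auto
        thus ?thesis using valid_before[OF v' ij(1) True] wi by simp
      next
        case jL: False
        show ?thesis
        proof (cases "i < ?L")
          case True
          hence "?w!i = reading T ! i" by (simp add: nth_append)
          moreover have "reading T ! i \<in> set (reading T)" using True by simp
          moreover have "?w!j \<in> set r" using jL ij by (auto simp: nth_append)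
          ultimately have False using eq disj v' unfolding f_def valid_def by (auto simp: disjoint_iff)
          thus ?thesis ..
        next
          case False
          hence "?w!i = r!(i - ?L)" "?w!j = r!(j - ?L)" using jL by (auto simp: nth_append)
          moreover have "i - ?L < j - ?L" "j - ?L < length r" using ij False by auto
          ultimately show ?thesis using sr by (simp add: sorted_wrt_iff_nth_less)
        qed
      qed
    qed
    have "{v\<in>set ?w. f v \<noteq> 0} = {v\<in>set (reading T). f' v \<noteq> 0} \<union> set r"
      unfolding f_def using disj by auto
    moreover have "card ({v\<in>set (reading T). f' v \<noteq> 0} \<union> set r) = card {v\<in>set (reading T). f' v \<noteq> 0} + card (set r)"
      by (rule card_Un_disjoint) (use disj in auto)
    ultimately have "cnt ?w f = cnt (reading T) f' + length r" unfolding cnt_def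
      using distinct_card[OF dr] by simp
    moreover have "rs (r#T) k = length r + rs T k'" unfolding rs_def Suc sum.lessThan_Suc_shift
      by (simp del: nth_Cons_Suc) (rule sum.cong, simp_all)
    ultimately show ?thesis using vf c' by (intro exI[of _ f]) simp
  qed
qed

lemma tab_nth: "tab T \<Longrightarrow> Suc i < length T \<Longrightarrow> fits (T!i) (T!Suc i)"
proof (induction T arbitrary: i rule: tab.induct)
  case (3 r s rs) thus ?case by (cases i) auto
qed auto

lemma tab_col: "tab T \<Longrightarrow> i < j \<Longrightarrow> j < length T \<Longrightarrow>
   length (T!j) \<le> length (T!i) \<and> (\<forall>c<length (T!j). T!i!c < T!j!c)"
proof (induction j)
  case 0 thus ?case by simp
next
  case (Suc j)
  have f: "fits (T!j) (T!Suc j)" using tab_nth[OF Suc.prems(1)] Suc.prems by simp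
  show ?case
  proof (cases "i = j")
    case True thus ?thesis using f unfolding fits_def by simp
  next
    case False
    hence IH: "length (T!j) \<le> length (T!i) \<and> (\<forall>c<length (T!j). T!i!c < T!j!c)"
      using Suc by simp
    thus ?thesis using f unfolding fits_def by (meson le_trans less_le_trans order.strict_trans)
  qed
qed

lemma before_app: "a \<in> set xs \<Longrightarrow> b \<in> set ys \<Longrightarrow>
   \<exists>p q. p < q \<and> q < length (xs@ys) \<and> (xs@ys)!p = a \<and> (xs@ys)!q = b"
proof -
  assume "a \<in> set xs" "b \<in> set ys"
  then obtain p q where "p < length xs" "xs!p = a" "q < length ys" "ys!q = b" by (auto simp: in_set_conv_nth)
  thus ?thesis by (intro exI[of _ p] exI[of _ "length xs + q"]) (auto simp: nth_append)
qed

lemma reading_split: "j \<le> length T \<Longrightarrow> reading T = concat (rev (drop j T)) @ concat (rev (take j T))"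
proof -
  assume "j \<le> length T"
  show ?thesis unfolding reading_def by (metis append_take_drop_id concat_append rev_append)
qed

lemma set_reading: "set (reading T) = {T!r!c | r c. r < length T \<and> c < length (T!r)}"
  unfolding reading_def by (auto simp: in_set_conv_nth) force+

lemma upperF:
  assumes t: "tab T" and d: "distinct (reading T)" and v: "valid k (reading T) f"
  shows "cnt (reading T) f \<le> rs T k"
proof (cases "T = []")
  case True thus ?thesis by (simp add: cnt_def)
next
  case False
  define L where "L = length (T!0)"
  have lenle: "r < length T \<Longrightarrow> length (T!r) \<le> L" for r
    using tab_col[OF t, of 0 r] unfolding L_def by (cases r) auto
  define D where "D c = {r. r < length T \<and> c < length (T!r)}" for c
  define Sc where "Sc c = (\<lambda>r. T!r!c) ` {r\<in>D c. f (T!r!c) \<noteq> 0}" for c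
  define E where "E c = {r. r < k \<and> r < length T \<and> c < length (T!r)}" for c
  have finD: "finite (D c)" for c unfolding D_def by auto
  have S_sub: "{v\<in>set (reading T). f v \<noteq> 0} \<subseteq> (\<Union>c<L. Sc c)"
  proof
    fix v assume "v \<in> {v\<in>set (reading T). f v \<noteq> 0}"
    then obtain r c where "r < length T" "c < length (T!r)" "v = T!r!c" "f v \<noteq> 0"
      unfolding set_reading by auto
    moreover hence "c < L" using lenle by fastforce
    ultimately show "v \<in> (\<Union>c<L. Sc c)" unfolding Sc_def D_def by auto
  qed
  have finSc: "finite (Sc c)" for c unfolding Sc_def using finD by auto
  have c1: "cnt (reading T) f \<le> (\<Sum>c<L. card (Sc c))"
  proof -
    have "cnt (reading T) f \<le> card (\<Union>c<L. Sc c)" unfolding cnt_def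
      by (rule card_mono[OF _ S_sub]) (use finSc in auto)
    also have "\<dots> \<le> (\<Sum>c<L. card (Sc c))" by (rule card_UN_le) simp
    finally show ?thesis .
  qed
  have bnd: "card (Sc c) \<le> card (E c)" for c
  proof -
    have inj: "inj_on f (Sc c)"
    proof (rule inj_onI)
      fix a b assume a: "a \<in> Sc c" and b: "b \<in> Sc c" and eq: "f a = f b"
      obtain ra where ra: "ra \<in> D c" "f (T!ra!c) \<noteq> 0" "a = T!ra!c" using a unfolding Sc_def by auto
      obtain rb where rb: "rb \<in> D c" "f (T!rb!c) \<noteq> 0" "b = T!rb!c" using b unfolding Sc_def by auto
      have no: "False" if "r1 \<in> D c" "r2 \<in> D c" "r1 < r2" "f (T!r1!c) = f (T!r2!c)" "f (T!r1!c) \<noteq> 0" for r1 r2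
      proof -
        have lt: "T!r1!c < T!r2!c" using tab_col[OF t that(3)] that(1,2) unfolding D_def by auto
        have "T!r1 \<in> set (take r2 T)" using that unfolding D_def
          by (auto simp: in_set_conv_nth intro!: exI[of _ r1])
        moreover have "T!r1!c \<in> set (T!r1)" using that unfolding D_def by simp
        ultimately have in1: "T!r1!c \<in> set (concat (rev (take r2 T)))" unfolding set_concat set_rev by blast
        have "drop r2 T = T!r2 # drop (Suc r2) T" using that unfolding D_def by (simp add: Cons_nth_drop_Suc)
        hence in2: "T!r2!c \<in> set (concat (rev (drop r2 T)))" using that unfolding D_def by simp
        have rsp: "reading T = concat (rev (drop r2 T)) @ concat (rev (take r2 T))"
          using that(2) unfolding D_def by (intro reading_split) auto
        obtain p q where pq: "p < q" "q < length (reading T)" "reading T ! p = T!r2!c" "reading T ! q = T!r1!c"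
          using before_app[OF in2 in1] rsp by metis
        have "T!r2!c < T!r1!c" using valid_before[OF v pq(1,2)] pq that(4,5) by simp
        thus False using lt by simp
      qed
      show "a = b"
      proof (cases ra rb rule: linorder_cases)
        case less thus ?thesis using no[OF ra(1) rb(1) less] eq ra rb by simp
      next
        case equal thus ?thesis using ra rb by simp
      next
        case greater thus ?thesis using no[OF rb(1) ra(1) greater] eq ra rb by simp
      qed
    qed
    have "f ` Sc c \<subseteq> {1..k}"
    proof
      fix y assume "y \<in> f ` Sc c"
      then obtain r where "r \<in> D c" "f (T!r!c) \<noteq> 0" "y = f (T!r!c)" unfolding Sc_def by auto
      moreover have "T!r!c \<in> set (reading T)" using \<open>r \<in> D c\<close> unfolding set_reading D_def by auto
      ultimately show "y \<in> {1..k}" using v unfolding valid_def by auto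
    qed
    hence ck: "card (Sc c) \<le> k" using card_inj_on_le[OF inj] by (metis card_atLeastAtMost diff_Suc_1 finite_atLeastAtMost)
    have cD: "card (Sc c) \<le> card (D c)" unfolding Sc_def
      by (rule order.trans[OF card_image_le]) (auto intro!: card_mono finD)
    show ?thesis
    proof (cases "D c \<subseteq> {..<k}")
      case True
      hence "E c = D c" unfolding E_def D_def by auto
      thus ?thesis using cD by simp
    next
      case False
      then obtain r where r: "r \<in> D c" "k \<le> r" by (meson lessThan_iff not_le subsetI)
      have "{..<k} \<subseteq> D c"
      proof
        fix r' assume "r' \<in> {..<k}"
        hence "r' < r" using r by simp
        moreover have "r < length T" "c < length (T!r)" using r unfolding D_def by auto
        ultimately show "r' \<in> D c" using tab_col[OF t, of r' r] unfolding D_def by auto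
      qed
      hence "E c = {..<k}" unfolding E_def D_def by auto
      thus ?thesis using ck by simp
    qed
  qed
  have c2: "(\<Sum>c<L. card (E c)) = rs T k"
  proof -
    have "card (E c) = (\<Sum>r<k. if r < length T \<and> c < length (T!r) then 1 else 0)" for c
    proof -
      have "E c = {r \<in> {..<k}. r < length T \<and> c < length (T!r)}" unfolding E_def by auto
      thus ?thesis by (simp add: sum.inter_filter[symmetric])
    qed
    hence "(\<Sum>c<L. card (E c)) = (\<Sum>c<L. \<Sum>r<k. if r < length T \<and> c < length (T!r) then 1 else 0)" by simp
    also have "\<dots> = (\<Sum>r<k. \<Sum>c<L. if r < length T \<and> c < length (T!r) then 1 else 0)" by (rule sum.swap)
    also have "\<dots> = rs T k" unfolding rs_def
    proof (rule sum.cong[OF refl])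
      fix r assume "r \<in> {..<k}"
      show "(\<Sum>c<L. if r < length T \<and> c < length (T!r) then 1 else 0) = (if r < length T then length (T!r) else 0)"
      proof (cases "r < length T")
        case True
        have "{c \<in> {..<L}. c < length (T!r)} = {..<length (T!r)}" using lenle[OF True] by auto
        hence "(\<Sum>c<L. if c < length (T!r) then 1 else 0) = length (T!r)"
          by (simp add: sum.inter_filter[symmetric])
        thus ?thesis using True by simp
      qed simp
    qed
    finally show ?thesis .
  qed
  show ?thesis using c1 c2 bnd sum_mono[of "{..<L}" "\<lambda>c. card (Sc c)" "\<lambda>c. card (E c)"] by simp
qed

lemma mset_reading: "mset (reading T) = mset (concat T)"
  by (induction T) (auto simp: ac_simps)

lemma gr_tab: "tab T \<Longrightarrow> distinct (reading T) \<Longrightarrow> gr k (reading T) = rs T k"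
proof -
  assume t: "tab T" and d: "distinct (reading T)"
  obtain f where "valid k (reading T) f" "rs T k \<le> cnt (reading T) f"
    using lowerF[OF _ d] tab_sorted[OF t] by blast
  hence "rs T k \<le> gr k (reading T)" using gr_ge by (meson le_trans)
  moreover obtain g where "valid k (reading T) g" "gr k (reading T) = cnt (reading T) g" using gr_ex by blast
  hence "gr k (reading T) \<le> rs T k" using upperF[OF t d] by simp
  ultimately show ?thesis by simp
qed

lemma gr_rsk: "distinct w \<Longrightarrow> gr k w = rs (rsk_P w) k"
proof -
  assume d: "distinct w"
  note I = rsk_inv[OF d]
  have "distinct (reading (rsk_P w))" using I mset_reading d
    by (metis mset_eq_imp_distinct_iff)
  thus ?thesis using knuth_gr[OF I[THEN conjunct2, THEN conjunct2] d] gr_tab I by simp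
qed




lemma part_sum: "(\<Sum>m=1..j. part lam m) = (\<Sum>i<j. if i < length lam then lam!i else 0)"
proof (induction j)
  case 0 thus ?case by simp
next
  case (Suc j)
  have "(\<Sum>m=1..Suc j. part lam m) = (\<Sum>m=1..j. part lam m) + part lam (Suc j)" by simp
  moreover have "part lam (Suc j) = (if j < length lam then lam!j else 0)" unfolding Defs.part_def by auto
  ultimately show ?case using Suc.IH by simp
qed

lemma shape_sum: "(\<Sum>m=1..j. part (rsk_shape w) m) = rs (rsk_P w) j"
  unfolding part_sum rsk_shape_def rs_def by (rule sum.cong) auto

lemma card_le_Diff1: "card A \<le> card (A - {x}) + 1"
  by (cases "finite A"; cases "x \<in> A") (auto simp: card_Diff_singleton)

lemma swap_gr:
  assumes d: "distinct (p@[a,b]@s)" and ab: "a < b"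
  shows "gr k (p@[b,a]@s) \<le> gr k (p@[a,b]@s) \<and> gr k (p@[a,b]@s) \<le> gr k (p@[b,a]@s) + 1"
proof
  show "gr k (p@[b,a]@s) \<le> gr k (p@[a,b]@s)"
  proof (rule gr_leI)
    fix f assume v: "valid k (p@[b,a]@s) f"
    have "\<not>(f b = f a \<and> f b \<noteq> 0)"
      using valid_before[OF v, of "length p" "Suc (length p)"] ab by (auto simp: nth_mid2)
    hence "valid k (p@[a,b]@s) f" using swap_valid[OF v] by simp
    thus "\<exists>g. valid k (p@[a,b]@s) g \<and> cnt (p@[b,a]@s) f \<le> cnt (p@[a,b]@s) g"
      using cnt_swap[of p a b s f] by auto
  qed
next
  let ?w = "p@[a,b]@s"
  obtain f where v: "valid k ?w f" and g: "gr k ?w = cnt ?w f" using gr_ex by blast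
  define f' where "f' = f(a := 0)"
  have v': "valid k ?w f'" unfolding valid_def
  proof (intro conjI allI impI ballI)
    fix u assume "u \<in> set ?w" thus "f' u \<le> k" using v unfolding valid_def f'_def by auto
  next
    fix i j assume ij: "i < j" "j < length ?w" and eq: "f' (?w!i) = f' (?w!j)" and nz: "f' (?w!i) \<noteq> 0"
    hence "f (?w!i) = f (?w!j)" "f (?w!i) \<noteq> 0" unfolding f'_def by (auto split: if_splits)
    thus "?w!i < ?w!j" using valid_before[OF v ij] by simp
  qed
  have "valid k (p@[b,a]@s) f'" by (rule swap_valid[OF v']) (simp add: f'_def)
  hence "cnt (p@[b,a]@s) f' \<le> gr k (p@[b,a]@s)" by (rule gr_ge)
  moreover have "cnt ?w f \<le> cnt ?w f' + 1"
  proof -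
    have "{u\<in>set ?w. f' u \<noteq> 0} = {u\<in>set ?w. f u \<noteq> 0} - {a}" unfolding f'_def by auto
    moreover have "card {u\<in>set ?w. f u \<noteq> 0} \<le> card ({u\<in>set ?w. f u \<noteq> 0} - {a}) + 1"
      by (rule card_le_Diff1)
    ultimately show ?thesis unfolding cnt_def by simp
  qed
  moreover have "cnt (p@[b,a]@s) f' = cnt ?w f'" using cnt_swap[of p b a s f'] by simp
  ultimately show "gr k ?w \<le> gr k (p@[b,a]@s) + 1" using g by simp
qed

theorem proposition3:
  fixes n i :: nat and \<pi> \<tau> :: "nat list"
  assumes "n \<ge> 2"
    and "is_perm n \<pi>"
    and "1 \<le> i" and "i \<le> n - 1"
    and "\<pi> ! (i - 1) < \<pi> ! i"
    and "\<tau> = \<pi>[i - 1 := \<pi> ! i, i := \<pi> ! (i - 1)]"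
  shows "\<forall>j\<in>{1..n}.
           (\<Sum>m=1..j. part (rsk_shape \<tau>) m) \<le> (\<Sum>m=1..j. part (rsk_shape \<pi>) m) \<and>
           (\<Sum>m=1..j. part (rsk_shape \<pi>) m) \<le> (\<Sum>m=1..j. part (rsk_shape \<tau>) m) + 1"
proof
  fix j assume "j \<in> {1..n}"
  have len: "length \<pi> = n" and d0: "distinct \<pi>" using assms(2) unfolding is_perm_def by auto
  have il: "i < length \<pi>" "i - 1 < length \<pi>" "Suc (i - 1) = i" using assms(1,3,4) len by auto
  define p where "p = take (i - 1) \<pi>"
  define a where "a = \<pi> ! (i - 1)"
  define b where "b = \<pi> ! i"
  define s where "s = drop (Suc i) \<pi>"
  have lp: "length p = i - 1" unfolding p_def using il by simp
  have dr1: "drop (i - 1) \<pi> = a # drop i \<pi>" unfolding a_def using il Cons_nth_drop_Suc[of "i - 1" \<pi>] by simp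
  have dr2: "drop i \<pi> = b # s" unfolding b_def s_def using Cons_nth_drop_Suc[OF il(1)] by simp
  have pe: "\<pi> = p @ [a,b] @ s"
  proof -
    have "\<pi> = take (i - 1) \<pi> @ drop (i - 1) \<pi>" by simp
    also have "\<dots> = p @ [a,b] @ s" unfolding dr1 dr2 p_def by simp
    finally show ?thesis .
  qed
  have te: "\<tau> = p @ [b,a] @ s"
  proof -
    have "\<tau> = (p @ [a,b] @ s)[length p := b, Suc (length p) := a]"
      using assms(6) pe lp il unfolding a_def b_def by (metis Suc_pred' assms(3) less_eq_Suc_le)
    thus ?thesis by (simp add: list_update_append)
  qed
  have d: "distinct (p @ [a,b] @ s)" using d0 pe by simp
  have dt: "distinct \<tau>" using d te by auto
  have ab: "a < b" using assms(5) unfolding a_def b_def .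
  have G: "gr j \<tau> \<le> gr j \<pi> \<and> gr j \<pi> \<le> gr j \<tau> + 1" using swap_gr[OF d ab, of j] pe te by simp
  show "(\<Sum>m=1..j. part (rsk_shape \<tau>) m) \<le> (\<Sum>m=1..j. part (rsk_shape \<pi>) m) \<and>
           (\<Sum>m=1..j. part (rsk_shape \<pi>) m) \<le> (\<Sum>m=1..j. part (rsk_shape \<tau>) m) + 1"
    unfolding shape_sum gr_rsk[OF d0, symmetric] gr_rsk[OF dt, symmetric] using G .
qed


end
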